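(* Let $T$ be a $(2n-1)$-universal tree. Let $T'$ be any binary rooted tree with $n$ leaves and no degree-1 nodes, and let $c:\mathsf{inner}(T')\to\{0,1\}$ be any assignment. Then there is an injective map $f$ from the nodes of $T'$ to the nodes of $T$ with the following properties: - $f(\mathsf{NCA}(u,v))=\mathsf{NCA}(f(u),f(v))$ for all $u,v$; - every inner node $v$ with $c(v)=0$ is mapped to a node of even depth; - every inner node $v$ with $c(v)=1$ is mapped to a node of odd depth. That is, $T$ is a parity-constrained minor-universal tree for binary trees with $n$ leaves and no degree-1 nodes.
   Context: Trees are rooted; depth is the distance from the root (the root has depth 0); degree is the number of children; $\mathsf{inner}(T')$ is the set of non-leaf nodes of $T'$. $\mathsf{NCA}$ denotes the nearest common ancestor. Cutting: select nodes $a,b$ with $a$ a child of $b$, and remove the subtree rooted at $a$ together with the edge $ab$. Contraction: select an internal node $b$ with parent $a$ and exactly one child $c$, and remove $b$. If $c$ is internal, the children of $c$ become children of $a$ and $c$ is removed. If $c$ is a leaf, it becomes a child of $a$. $T$ implements $T'$ if $T'$ can be obtained (up to isomorphism) from $T$ by a sequence of these operations. $T$ is $m$-universal if it implements every rooted tree with at most $m$ leaves and no degree-1 nodes. *)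

theory Defs
  imports Main
begin

text \<open>Finite rooted trees; children are kept in a list, but trees are only
compared up to isomorphism (arbitrary reordering of children).
Nodes are addressed by positions: lists of child indices from the root.\<close>

datatype rtree = Nd "rtree list"

fun kids :: "rtree \<Rightarrow> rtree list" where
  "kids (Nd ts) = ts"

fun valid :: "rtree \<Rightarrow> nat list \<Rightarrow> bool" where
  "valid t [] = True"
| "valid (Nd ts) (i # p) = (i < length ts \<and> valid (ts ! i) p)"

definition pos :: "rtree \<Rightarrow> nat list set" where
  "pos t = {p. valid t p}"

fun subt :: "rtree \<Rightarrow> nat list \<Rightarrow> rtree" where
  "subt t [] = t"
| "subt (Nd ts) (i # p) = (if i < length ts then subt (ts ! i) p else Nd [])"

definition depth :: "nat list \<Rightarrow> nat" where
  "depth p = length p"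

definition degree :: "rtree \<Rightarrow> nat list \<Rightarrow> nat" where
  "degree t p = length (kids (subt t p))"

definition leaves :: "rtree \<Rightarrow> nat list set" where
  "leaves t = {p \<in> pos t. degree t p = 0}"

definition inner :: "rtree \<Rightarrow> nat list set" where
  "inner t = {p \<in> pos t. degree t p \<noteq> 0}"

definition no_deg1 :: "rtree \<Rightarrow> bool" where
  "no_deg1 t \<longleftrightarrow> (\<forall>p \<in> pos t. degree t p \<noteq> 1)"

definition binary :: "rtree \<Rightarrow> bool" where
  "binary t \<longleftrightarrow> (\<forall>p \<in> pos t. degree t p \<le> 2)"

fun nca :: "nat list \<Rightarrow> nat list \<Rightarrow> nat list" where
  "nca (i # p) (j # q) = (if i = j then i # nca p q else [])"
| "nca _ _ = []"

inductive tiso :: "rtree \<Rightarrow> rtree \<Rightarrow> bool" where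
  "bij_betw \<sigma> {..<length ts} {..<length us} \<Longrightarrow>
   (\<forall>i < length ts. tiso (ts ! i) (us ! \<sigma> i)) \<Longrightarrow> tiso (Nd ts) (Nd us)"

text \<open>Contraction at node b (the i-th child of a) with exactly one child c:
if c is a leaf, b is replaced by c; if c is internal, b and c are removed and the
children of c become children of a.\<close>
inductive op_step :: "rtree \<Rightarrow> rtree \<Rightarrow> bool" where
  cut: "i < length ts \<Longrightarrow> op_step (Nd ts) (Nd (take i ts @ drop (Suc i) ts))"
| contr_leaf: "i < length ts \<Longrightarrow> ts ! i = Nd [Nd []] \<Longrightarrow>
     op_step (Nd ts) (Nd (ts[i := Nd []]))"
| contr_inner: "i < length ts \<Longrightarrow> ts ! i = Nd [Nd cs] \<Longrightarrow> cs \<noteq> [] \<Longrightarrow>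
     op_step (Nd ts) (Nd (take i ts @ cs @ drop (Suc i) ts))"
| deep: "i < length ts \<Longrightarrow> op_step (ts ! i) t \<Longrightarrow> op_step (Nd ts) (Nd (ts[i := t]))"

definition implements :: "rtree \<Rightarrow> rtree \<Rightarrow> bool" where
  "implements T T' \<longleftrightarrow> (\<exists>S. op_step\<^sup>*\<^sup>* T S \<and> tiso S T')"

definition universal :: "nat \<Rightarrow> rtree \<Rightarrow> bool" where
  "universal m T \<longleftrightarrow>
     (\<forall>T'. card (leaves T') \<le> m \<and> no_deg1 T' \<longrightarrow> implements T T')"

end

theory Submission
  imports Defs "HOL-Library.Sublist"
begin


lemma nca_prefix1: "prefix (nca u v) u"
  by (induction u v rule: nca.induct) auto
lemma nca_prefix2: "prefix (nca u v) v"
  by (induction u v rule: nca.induct) auto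
lemma nca_append: "nca (x @ a) (x @ b) = x @ nca a b"
  by (induction x) auto
lemma nca_greatest: "prefix w u \<Longrightarrow> prefix w v \<Longrightarrow> prefix w (nca u v)"
  by (induction u v arbitrary: w rule: nca.induct) (auto simp: prefix_Cons)
lemma nca_commute: "nca u v = nca v u"
  by (induction u v rule: nca.induct) auto
lemma nca_Nil1[simp]: "nca [] v = []" by simp
lemma nca_prefix_eq: "prefix u v \<Longrightarrow> nca u v = u"
proof -
  assume "prefix u v"
  then obtain r where "v = u @ r" by (auto simp: prefix_def)
  then show ?thesis using nca_append[of u "[]" r] by simp
qed
lemma nca_parallel: "u \<parallel> v \<Longrightarrow> \<exists>a b x y. a \<noteq> b \<and> u = nca u v @ a # x \<and> v = nca u v @ b # y"
proof -
  assume "u \<parallel> v"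
  from parallel_decomp[OF this] obtain as b bs c cs where h: "b \<noteq> c" "u = as @ b # bs" "v = as @ c # cs"
    by iprover
  have "nca u v = as" unfolding h(2,3) using nca_append[of as "b#bs" "c#cs"] h(1) by simp
  then show ?thesis using h by blast
qed
lemma nca_parallel_strict1: "u \<parallel> v \<Longrightarrow> strict_prefix (nca u v) u"
  unfolding strict_prefix_def using nca_prefix1[of u v] nca_prefix2[of u v] parallelD1[of u v] by metis
lemma nca_parallel_strict2: "u \<parallel> v \<Longrightarrow> strict_prefix (nca u v) v"
  unfolding strict_prefix_def using nca_prefix1[of u v] nca_prefix2[of u v] parallelD2[of u v] by metis
lemma nca_ext: assumes "prefix u u'" "prefix v v'" "u \<parallel> v" shows "nca u' v' = nca u v"
proof -
  obtain a b x y where ab: "a \<noteq> b" "u = nca u v @ a # x" "v = nca u v @ b # y"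
    using nca_parallel[OF assms(3)] by blast
  obtain x' y' where "u' = u @ x'" "v' = v @ y'" using assms by (auto simp: prefix_def)
  then have "u' = nca u v @ a # (x @ x')" "v' = nca u v @ b # (y @ y')" using ab by auto
  then show ?thesis using ab(1) by (simp add: nca_append)
qed

lemma valid_append: "valid t (p @ q) \<longleftrightarrow> valid t p \<and> valid (subt t p) q"
proof (induction p arbitrary: t)
  case Nil then show ?case by simp
next
  case (Cons i p) then show ?case by (cases t) auto
qed
lemma subt_Nil_tree: "subt (Nd []) q = Nd []"
  by (cases q) auto
lemma subt_append: "subt t (p @ q) = subt (subt t p) q"
proof (induction p arbitrary: t)
  case Nil then show ?case by simp
next
  case (Cons i p) then show ?case by (cases t) (auto simp: subt_Nil_tree)
qed
lemma valid_prefix: "valid t p \<Longrightarrow> prefix q p \<Longrightarrow> valid t q"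
  by (auto simp: prefix_def valid_append)
lemma pos_Cons: "(j # q \<in> pos (Nd bs)) \<longleftrightarrow> j < length bs \<and> q \<in> pos (bs ! j)"
  by (simp add: pos_def)
lemma Nil_pos[simp]: "[] \<in> pos t" by (simp add: pos_def)
lemma degree_Cons: "j < length bs \<Longrightarrow> degree (Nd bs) (j # q) = degree (bs ! j) q"
  by (simp add: degree_def)
lemma inner_Cons: "(j # q \<in> inner (Nd bs)) \<longleftrightarrow> j < length bs \<and> q \<in> inner (bs ! j)"
  by (auto simp: inner_def pos_Cons degree_Cons)
lemma inner_Nil: "([] \<in> inner t) \<longleftrightarrow> kids t \<noteq> []"
  by (simp add: inner_def degree_def)
lemma inner_append: "(p @ q \<in> inner t) \<longleftrightarrow> valid t p \<and> q \<in> inner (subt t p)"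
  by (auto simp: inner_def pos_def valid_append degree_def subt_append)
lemma valid_kids: "valid t (j # q) \<longleftrightarrow> j < length (kids t) \<and> valid (kids t ! j) q"
  by (cases t) auto
lemma strict_prefix_inner: assumes "valid t p" "strict_prefix q p" shows "q \<in> inner t"
proof -
  obtain a r where "p = q @ a # r" using assms(2)
    by (metis prefix_def strict_prefix_def self_append_conv neq_Nil_conv)
  then have "valid t q" "valid (subt t q) (a # r)" using assms(1) valid_append by auto
  then show ?thesis using valid_kids[of "subt t q" a r]
    by (auto simp: inner_def pos_def degree_def)
qed
lemma inner_kids: "q \<in> inner t \<Longrightarrow> kids t \<noteq> []"
  by (cases q; cases t) (auto simp: inner_def pos_def degree_def)


definition R0 :: "rtree \<Rightarrow> rtree \<Rightarrow> (nat list \<Rightarrow> nat list) \<Rightarrow> bool" where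
  "R0 S T f \<longleftrightarrow> (\<forall>p\<in>pos S. f p \<in> pos T)
    \<and> (\<forall>u\<in>pos S. \<forall>v\<in>pos S. prefix u v \<longrightarrow> prefix (f u) (f v))
    \<and> (\<forall>u\<in>pos S. \<forall>v\<in>pos S. u \<parallel> v \<longrightarrow> f u \<parallel> f v \<and> prefix (f (nca u v)) (nca (f u) (f v))
         \<and> (even (length (nca (f u) (f v))) = even (length (f (nca u v)))))"

definition R :: "rtree \<Rightarrow> rtree \<Rightarrow> (nat list \<Rightarrow> nat list) \<Rightarrow> bool" where
  "R S T f \<longleftrightarrow> R0 S T f \<and> (\<forall>p\<in>inner S. f p \<in> inner T \<and> even (length (f p)) = even (length p))"

lemma pos_nca: "u \<in> pos S \<Longrightarrow> nca u v \<in> pos S"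
  using valid_prefix nca_prefix1 by (auto simp: pos_def)

lemma comp0:
  assumes f: "R S T f" and g: "R0 U S g" and gi: "\<forall>p\<in>inner U. g p \<in> inner S"
  shows "R0 U T (f \<circ> g)"
proof -
  have fa: "\<forall>p\<in>pos S. f p \<in> pos T" and fb: "\<forall>u\<in>pos S. \<forall>v\<in>pos S. prefix u v \<longrightarrow> prefix (f u) (f v)"
   and fc: "\<forall>u\<in>pos S. \<forall>v\<in>pos S. u \<parallel> v \<longrightarrow> f u \<parallel> f v \<and> prefix (f (nca u v)) (nca (f u) (f v))
         \<and> (even (length (nca (f u) (f v))) = even (length (f (nca u v))))"
   and fd: "\<forall>p\<in>inner S. f p \<in> inner T \<and> even (length (f p)) = even (length p)"
    using f unfolding R_def R0_def by blast+
  have ga: "\<forall>p\<in>pos U. g p \<in> pos S" and gb: "\<forall>u\<in>pos U. \<forall>v\<in>pos U. prefix u v \<longrightarrow> prefix (g u) (g v)"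
   and gc: "\<forall>u\<in>pos U. \<forall>v\<in>pos U. u \<parallel> v \<longrightarrow> g u \<parallel> g v \<and> prefix (g (nca u v)) (nca (g u) (g v))
         \<and> (even (length (nca (g u) (g v))) = even (length (g (nca u v))))"
    using g unfolding R0_def by blast+
  have c: "(f \<circ> g) u \<parallel> (f \<circ> g) v \<and> prefix ((f \<circ> g) (nca u v)) (nca ((f \<circ> g) u) ((f \<circ> g) v))
         \<and> (even (length (nca ((f \<circ> g) u) ((f \<circ> g) v))) = even (length ((f \<circ> g) (nca u v))))"
    if u: "u \<in> pos U" and v: "v \<in> pos U" and uv: "u \<parallel> v" for u v
  proof -
    define w where "w = nca u v"
    define w' where "w' = nca (g u) (g v)"
    have gu: "g u \<in> pos S" and gv: "g v \<in> pos S" using ga u v by auto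
    have gp: "g u \<parallel> g v" "prefix (g w) w'" "even (length w') = even (length (g w))"
      using gc u v uv unfolding w_def w'_def by auto
    have w'p: "w' \<in> pos S" using pos_nca[OF gu] unfolding w'_def .
    have wp: "w \<in> pos U" using pos_nca[OF u] unfolding w_def .
    have gw: "g w \<in> pos S" using ga wp by auto
    have fp: "f (g u) \<parallel> f (g v)" "prefix (f w') (nca (f (g u)) (f (g v)))"
      "even (length (nca (f (g u)) (f (g v)))) = even (length (f w'))"
      using fc gu gv gp(1) unfolding w'_def by auto
    have w'i: "w' \<in> inner S" using strict_prefix_inner[of S "g u" w'] gu nca_parallel_strict1[OF gp(1)]
      unfolding w'_def by (auto simp: pos_def)
    have wi: "w \<in> inner U" using strict_prefix_inner[of U u w] u nca_parallel_strict1[OF uv]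
      unfolding w_def by (auto simp: pos_def)
    have gwi: "g w \<in> inner S" using gi wi by auto
    have "prefix (f (g w)) (f w')" using fb gw w'p gp(2) by auto
    moreover have "even (length (f w')) = even (length w')" using fd w'i by auto
    moreover have "even (length (f (g w))) = even (length (g w))" using fd gwi by auto
    ultimately show ?thesis using fp gp(3) unfolding w_def by (auto intro: prefix_order.trans)
  qed
  show ?thesis unfolding R0_def
    using fa ga fb gb c by (auto simp: o_def)
qed

lemma comp:
  assumes f: "R S T f" and g: "R U S g"
  shows "R U T (f \<circ> g)"
proof -
  have "R0 U T (f \<circ> g)" using comp0[OF f] g unfolding R_def by blast
  moreover have "\<forall>p\<in>inner U. (f \<circ> g) p \<in> inner T \<and> even (length ((f \<circ> g) p)) = even (length p)"
    using f g unfolding R_def by auto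
  ultimately show ?thesis unfolding R_def by blast
qed

lemma R_id: "R t t id"
  unfolding R_def R0_def by auto



lemma parallel_Cons_same: "(j # a \<parallel> j # b) = (a \<parallel> b)"
  by (simp add: parallel_def)
lemma parallel_app_same: "(x @ a \<parallel> x @ b) = (a \<parallel> b)"
  by (induction x) (auto simp: parallel_Cons_same)

lemma G0:
  assumes r: "valid A r"
    and P: "\<forall>j<length bs. valid (subt A r) (P j) \<and> R0 (bs ! j) (subt (subt A r) (P j)) (G j)"
    and Pp: "\<forall>j<length bs. \<forall>k<length bs. j \<noteq> k \<longrightarrow> P j \<parallel> P k \<and> even (length (nca (P j) (P k)))"
    and f0: "f [] = r" and f1: "\<forall>j<length bs. \<forall>q. f (j # q) = r @ P j @ G j q"
  shows "R0 (Nd bs) A f"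
proof -
  have Ga: "G j q \<in> pos (subt (subt A r) (P j))" if "j < length bs" "q \<in> pos (bs ! j)" for j q
    using P that unfolding R0_def by blast
  have Gb: "prefix (G j u) (G j v)" if "j < length bs" "u \<in> pos (bs ! j)" "v \<in> pos (bs ! j)" "prefix u v" for j u v
    using P that unfolding R0_def by blast
  have Gc: "G j u \<parallel> G j v \<and> prefix (G j (nca u v)) (nca (G j u) (G j v))
         \<and> (even (length (nca (G j u) (G j v))) = even (length (G j (nca u v))))"
    if "j < length bs" "u \<in> pos (bs ! j)" "v \<in> pos (bs ! j)" "u \<parallel> v" for j u v
    using P that unfolding R0_def by blast
  have a: "f p \<in> pos A" if "p \<in> pos (Nd bs)" for p
  proof (cases p)
    case Nil then show ?thesis using r f0 by (simp add: pos_def)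
  next
    case (Cons j q)
    then have j: "j < length bs" and q: "q \<in> pos (bs ! j)" using that pos_Cons by auto
    have "valid A (r @ P j @ G j q)" using Ga[OF j q] P j r by (simp add: valid_append pos_def)
    then show ?thesis using f1 j Cons by (simp add: pos_def)
  qed
  have b: "prefix (f u) (f v)" if hb: "u \<in> pos (Nd bs)" "v \<in> pos (Nd bs)" "prefix u v" for u v
  proof (cases u)
    case Nil
    then show ?thesis using f0 f1 hb by (cases v) (auto simp: pos_Cons)
  next
    case (Cons j u')
    then obtain v' where v: "v = j # v'" "prefix u' v'" using hb(3) by (metis Cons_prefix_Cons prefix_def append_Cons)
    have j: "j < length bs" and u': "u' \<in> pos (bs ! j)" using hb(1) Cons pos_Cons by auto
    have v': "v' \<in> pos (bs ! j)" using hb(2) v pos_Cons by auto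
    show ?thesis using Gb[OF j u' v' v(2)] f1 j Cons v by simp
  qed
  have c: "f u \<parallel> f v \<and> prefix (f (nca u v)) (nca (f u) (f v))
         \<and> (even (length (nca (f u) (f v))) = even (length (f (nca u v))))"
    if hc: "u \<in> pos (Nd bs)" "v \<in> pos (Nd bs)" "u \<parallel> v" for u v
  proof -
    obtain j u' where u: "u = j # u'" using hc(3) by (cases u) auto
    obtain k v' where v: "v = k # v'" using hc(3) by (cases v) auto
    have j: "j < length bs" and u': "u' \<in> pos (bs ! j)" using hc(1) u pos_Cons by auto
    have k: "k < length bs" and v': "v' \<in> pos (bs ! k)" using hc(2) v pos_Cons by auto
    show ?thesis
    proof (cases "j = k")
      case True
      have uv: "u' \<parallel> v'" using hc(3) unfolding u v True by (rule parallel_cancel)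
      have e1: "nca u v = j # nca u' v'" using u v True by simp
      have e2: "nca (f u) (f v) = (r @ P j) @ nca (G j u') (G j v')"
        using f1 j u v True nca_append[of "r @ P j"] by simp
      have e3: "f (nca u v) = (r @ P j) @ G j (nca u' v')" using e1 f1 j by simp
      have fu: "f u = (r @ P j) @ G j u'" "f v = (r @ P j) @ G j v'" using f1 j k u v True by auto
      have g: "G j u' \<parallel> G j v'" "prefix (G j (nca u' v')) (nca (G j u') (G j v'))"
         "even (length (nca (G j u') (G j v'))) = even (length (G j (nca u' v')))"
        using Gc[OF j u' _ uv] v' True by auto
      have s1: "f u \<parallel> f v" unfolding fu parallel_app_same by (rule g(1))
      have s2: "prefix (f (nca u v)) (nca (f u) (f v))" unfolding e2 e3 same_prefix_prefix by (rule g(2))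
      have s3: "even (length (nca (f u) (f v))) = even (length (f (nca u v)))"
        unfolding e2 e3 length_append using g(3) by simp
      show ?thesis using s1 s2 s3 by blast
    next
      case False
      have pp: "P j \<parallel> P k" "even (length (nca (P j) (P k)))" using Pp j k False by auto
      have e1: "nca u v = []" using u v False by simp
      have fu: "f u = r @ (P j @ G j u')" "f v = r @ (P k @ G k v')" using f1 j k u v by auto
      have par: "P j @ G j u' \<parallel> P k @ G k v'" using pp(1) parallel_append by blast
      have "nca (P j @ G j u') (P k @ G k v') = nca (P j) (P k)"
        by (rule nca_ext[OF _ _ pp(1)]) simp_all
      then have e2: "nca (f u) (f v) = r @ nca (P j) (P k)" unfolding fu nca_append by simp
      have s1: "f u \<parallel> f v" unfolding fu parallel_app_same by (rule par)
      have s2: "prefix (f (nca u v)) (nca (f u) (f v))" unfolding e2 e1 f0 by simp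
      have s3: "even (length (nca (f u) (f v))) = even (length (f (nca u v)))"
        unfolding e2 e1 f0 length_append using pp(2) by simp
      show ?thesis using s1 s2 s3 by blast
    qed
  qed
  show ?thesis unfolding R0_def using a b c by blast
qed

lemma G1:
  assumes P: "\<forall>j<length bs. P j \<noteq> [] \<and> valid A (P j) \<and> R (bs ! j) (subt A (P j)) (G j)
      \<and> (kids (bs ! j) \<noteq> [] \<longrightarrow> odd (length (P j)))"
    and Pp: "\<forall>j<length bs. \<forall>k<length bs. j \<noteq> k \<longrightarrow> P j \<parallel> P k \<and> even (length (nca (P j) (P k)))"
    and f0: "f [] = []" and f1: "\<forall>j<length bs. \<forall>q. f (j # q) = P j @ G j q"
  shows "R (Nd bs) A f"
proof -
  have "R0 (Nd bs) A f"
    using G0[of A "[]" bs P G f] P Pp f0 f1 unfolding R_def by auto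
  moreover have "f p \<in> inner A \<and> even (length (f p)) = even (length p)" if p: "p \<in> inner (Nd bs)" for p
  proof (cases p)
    case Nil
    then have "bs \<noteq> []" using p inner_Nil by auto
    then have "P 0 \<noteq> []" "valid A (P 0)" using P by auto
    then have "kids A \<noteq> []" using valid_kids[of A] by (cases "P 0") auto
    then show ?thesis using Nil f0 inner_Nil by auto
  next
    case (Cons j q)
    then have j: "j < length bs" and q: "q \<in> inner (bs ! j)" using p inner_Cons by auto
    have Rj: "R (bs ! j) (subt A (P j)) (G j)" and vj: "valid A (P j)" using P j by auto
    have gq: "G j q \<in> inner (subt A (P j))" "even (length (G j q)) = even (length q)"
      using Rj q unfolding R_def by auto
    have "odd (length (P j))" using P j inner_kids[OF q] by auto
    then show ?thesis using gq vj inner_append f1 j Cons by auto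
  qed
  ultimately show ?thesis unfolding R_def by blast
qed



lemma heads_par: "a \<noteq> b \<Longrightarrow> a # x \<parallel> b # y \<and> nca (a # x) (b # y) = []"
  by (simp add: Cons_parallelI1)

lemma subt_single: "i < length ts \<Longrightarrow> subt (Nd ts) [i] = ts ! i" by simp
lemma valid_single: "valid (Nd ts) [i] = (i < length ts)" by simp

lemma G1s:
  assumes "\<forall>j<length bs. \<sigma> j < length ts \<and> R (bs ! j) (ts ! \<sigma> j) (G j)"
    and "inj_on \<sigma> {..<length bs}"
  shows "R (Nd bs) (Nd ts) (\<lambda>p. case p of [] \<Rightarrow> [] | j # q \<Rightarrow> \<sigma> j # G j q)"
proof (rule G1[where P = "\<lambda>j. [\<sigma> j]" and G = G])
  show "\<forall>j<length bs. [\<sigma> j] \<noteq> [] \<and> valid (Nd ts) [\<sigma> j] \<and> R (bs ! j) (subt (Nd ts) [\<sigma> j]) (G j)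
      \<and> (kids (bs ! j) \<noteq> [] \<longrightarrow> odd (length [\<sigma> j]))"
    using assms(1) by auto
  show "\<forall>j<length bs. \<forall>k<length bs. j \<noteq> k \<longrightarrow> [\<sigma> j] \<parallel> [\<sigma> k] \<and> even (length (nca [\<sigma> j] [\<sigma> k]))"
  proof (intro allI impI)
    fix j k assume "j < length bs" "k < length bs" "j \<noteq> k"
    then have "\<sigma> j \<noteq> \<sigma> k" using assms(2) by (auto simp: inj_on_def)
    then show "[\<sigma> j] \<parallel> [\<sigma> k] \<and> even (length (nca [\<sigma> j] [\<sigma> k]))" using heads_par by auto
  qed
qed auto

lemma step_R: "op_step T S \<Longrightarrow> \<exists>f. R S T f"
proof (induction rule: op_step.induct)
  case (cut i ts)
  define bs where "bs = take i ts @ drop (Suc i) ts"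
  define \<sigma> where "\<sigma> = (\<lambda>j::nat. if j < i then j else Suc j)"
  have lb: "length bs = length ts - 1" using cut by (simp add: bs_def)
  have "\<forall>j<length bs. \<sigma> j < length ts \<and> R (bs ! j) (ts ! \<sigma> j) id"
  proof (intro allI impI)
    fix j assume j: "j < length bs"
    have "bs ! j = ts ! \<sigma> j" using j cut lb unfolding bs_def \<sigma>_def
      by (auto simp: nth_append min_def)
    then show "\<sigma> j < length ts \<and> R (bs ! j) (ts ! \<sigma> j) id" using j lb R_id unfolding \<sigma>_def by auto
  qed
  moreover have "inj_on \<sigma> {..<length bs}" unfolding \<sigma>_def inj_on_def by auto
  ultimately show ?case using G1s[of bs \<sigma> ts "\<lambda>_. id"] unfolding bs_def by blast
next
  case (contr_leaf i ts)
  define bs where "bs = ts[i := Nd []]"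
  define P where "P = (\<lambda>j::nat. if j = i then [i, 0] else [j])"
  have lb: "length bs = length ts" by (simp add: bs_def)
  have "R (Nd bs) (Nd ts) (\<lambda>p. case p of [] \<Rightarrow> [] | j # q \<Rightarrow> P j @ id q)"
  proof (rule G1[where P = P and G = "\<lambda>_. id"])
    show "\<forall>j<length bs. P j \<noteq> [] \<and> valid (Nd ts) (P j) \<and> R (bs ! j) (subt (Nd ts) (P j)) id
      \<and> (kids (bs ! j) \<noteq> [] \<longrightarrow> odd (length (P j)))"
      using contr_leaf R_id lb unfolding P_def bs_def by auto
    show "\<forall>j<length bs. \<forall>k<length bs. j \<noteq> k \<longrightarrow> P j \<parallel> P k \<and> even (length (nca (P j) (P k)))"
      unfolding P_def using heads_par by auto
  qed auto
  then show ?case unfolding bs_def by blast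
next
  case (contr_inner i ts cs)
  define bs where "bs = take i ts @ cs @ drop (Suc i) ts"
  define l where "l = length cs"
  define P where "P = (\<lambda>j::nat. if j < i then [j] else if j < i + l then [i, 0, j - i] else [j - l + 1])"
  have lb: "length bs = length ts - 1 + l" using contr_inner by (simp add: bs_def l_def)
  have "R (Nd bs) (Nd ts) (\<lambda>p. case p of [] \<Rightarrow> [] | j # q \<Rightarrow> P j @ id q)"
  proof (rule G1[where P = P and G = "\<lambda>_. id"])
    show "\<forall>j<length bs. P j \<noteq> [] \<and> valid (Nd ts) (P j) \<and> R (bs ! j) (subt (Nd ts) (P j)) id
      \<and> (kids (bs ! j) \<noteq> [] \<longrightarrow> odd (length (P j)))"
    proof (intro allI impI)
      fix j assume j: "j < length bs"
      have "valid (Nd ts) (P j) \<and> bs ! j = subt (Nd ts) (P j)"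
      proof (cases "j < i")
        case True then show ?thesis using contr_inner j unfolding P_def bs_def by (auto simp: nth_append)
      next
        case F1: False
        show ?thesis
        proof (cases "j < i + l")
          case True then show ?thesis using contr_inner j F1 unfolding P_def bs_def l_def
            by (auto simp: nth_append)
        next
          case False then show ?thesis using contr_inner j F1 lb unfolding P_def bs_def l_def
            by (auto simp: nth_append)
        qed
      qed
      moreover have "P j \<noteq> [] \<and> odd (length (P j))" unfolding P_def by auto
      ultimately show "P j \<noteq> [] \<and> valid (Nd ts) (P j) \<and> R (bs ! j) (subt (Nd ts) (P j)) id
      \<and> (kids (bs ! j) \<noteq> [] \<longrightarrow> odd (length (P j)))" using R_id by metis
    qed
    show "\<forall>j<length bs. \<forall>k<length bs. j \<noteq> k \<longrightarrow> P j \<parallel> P k \<and> even (length (nca (P j) (P k)))"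
    proof (intro allI impI)
      fix j k assume jk: "j < length bs" "k < length bs" "j \<noteq> k"
      show "P j \<parallel> P k \<and> even (length (nca (P j) (P k)))"
      proof (cases "i \<le> j \<and> j < i + l \<and> i \<le> k \<and> k < i + l")
        case True
        then have "P j = [i, 0, j - i]" "P k = [i, 0, k - i]" "j - i \<noteq> k - i" using jk unfolding P_def by auto
        then show ?thesis using heads_par[of "j - i" "k - i" "[]" "[]"]
          by (simp add: Cons_parallelI2)
      next
        case False
        then have "hd (P j) \<noteq> hd (P k)" using jk unfolding P_def by auto
        moreover have "P j = hd (P j) # tl (P j)" "P k = hd (P k) # tl (P k)" unfolding P_def by auto
        ultimately have "P j \<parallel> P k \<and> nca (P j) (P k) = []"
          using heads_par[of "hd (P j)" "hd (P k)" "tl (P j)" "tl (P k)"] by simp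
        then show ?thesis by simp
      qed
    qed
  qed auto
  then show ?case unfolding bs_def by blast
next
  case (deep i ts t)
  then obtain g where g: "R t (ts ! i) g" by blast
  define bs where "bs = ts[i := t]"
  define G where "G = (\<lambda>j. if j = i then g else id)"
  have "\<forall>j<length bs. id j < length ts \<and> R (bs ! j) (ts ! id j) (G j)"
    using g R_id deep(1) unfolding bs_def G_def by auto
  then show ?case using G1s[of bs id ts G] unfolding bs_def by auto
qed

lemma steps_R: "op_step\<^sup>*\<^sup>* T S \<Longrightarrow> \<exists>f. R S T f"
proof (induction rule: rtranclp_induct)
  case base then show ?case using R_id by blast
next
  case (step y z)
  then obtain f g where "R y T f" "R z y g" using step_R by blast
  then show ?case using comp by blast
qed

lemma tiso_R: "tiso S U \<Longrightarrow> \<exists>f. R U S f"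
proof (induction rule: tiso.induct)
  case (1 \<sigma> ts us)
  define \<tau> where "\<tau> = inv_into {..<length ts} \<sigma>"
  have tau: "\<tau> j < length ts \<and> \<sigma> (\<tau> j) = j" if "j < length us" for j
    using 1(1) that unfolding \<tau>_def bij_betw_def
    by (metis bij_betw_def 1(1) bij_betw_inv_into_right inv_into_into lessThan_iff)
  have "\<forall>i<length ts. \<exists>g. R (us ! \<sigma> i) (ts ! i) g" using 1(2) by blast
  then obtain G where G: "\<forall>i<length ts. R (us ! \<sigma> i) (ts ! i) (G i)" by metis
  have "\<forall>j<length us. \<tau> j < length ts \<and> R (us ! j) (ts ! \<tau> j) (G (\<tau> j))"
    using tau G by metis
  moreover have "inj_on \<tau> {..<length us}"
    unfolding inj_on_def using tau by (metis lessThan_iff)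
  ultimately show ?case using G1s[of us \<tau> ts "\<lambda>j. G (\<tau> j)"] by blast
qed



lemma par_ext: "a \<parallel> b \<Longrightarrow> prefix a a' \<Longrightarrow> prefix b b' \<Longrightarrow> a' \<parallel> b'"
  by (auto simp: prefix_def parallel_append)

lemma valid_snoc: "valid t (p @ [k]) \<longleftrightarrow> valid t p \<and> k < degree t p"
  by (simp add: valid_append valid_kids degree_def)

lemma Fin:
  assumes H: "R0 S T H" and bin: "binary S" and nd: "no_deg1 S"
  shows "\<exists>F. F ` pos S \<subseteq> pos T \<and> inj_on F (pos S)
     \<and> (\<forall>u \<in> pos S. \<forall>v \<in> pos S. F (nca u v) = nca (F u) (F v))
     \<and> (\<forall>p \<in> inner S. even (length (F p)) = even (length (H p)))"
proof -
  have Ha: "\<forall>p\<in>pos S. H p \<in> pos T" and Hb: "\<forall>u\<in>pos S. \<forall>v\<in>pos S. prefix u v \<longrightarrow> prefix (H u) (H v)"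
   and Hc: "\<forall>u\<in>pos S. \<forall>v\<in>pos S. u \<parallel> v \<longrightarrow> H u \<parallel> H v \<and> prefix (H (nca u v)) (nca (H u) (H v))
         \<and> (even (length (nca (H u) (H v))) = even (length (H (nca u v))))"
    using H unfolding R0_def by blast+
  define F where "F p = (if p \<in> inner S then nca (H (p @ [0])) (H (p @ [1])) else H p)" for p
  have deg2: "degree S p = 2" if "p \<in> inner S" for p
  proof -
    have "p \<in> pos S" "degree S p \<noteq> 0" using that unfolding inner_def by auto
    moreover have "degree S p \<le> 2" "degree S p \<noteq> 1"
      using calculation(1) bin nd unfolding binary_def no_deg1_def by blast+
    ultimately show ?thesis by linarith
  qed
  have ch: "p @ [k] \<in> pos S \<longleftrightarrow> k < 2" if "p \<in> inner S" for p k
  proof -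
    have "valid S p" using that unfolding inner_def pos_def by blast
    then show ?thesis using valid_snoc[of S p k] deg2[OF that] unfolding pos_def by simp
  qed
  have p01: "p @ [0] \<parallel> p @ [1]" "nca (p @ [0]) (p @ [1]) = p" for p :: "nat list"
  proof -
    have h: "[0::nat] \<parallel> [1] \<and> nca [0::nat] [1] = []" by (rule heads_par) simp
    show "p @ [0] \<parallel> p @ [1]" unfolding parallel_app_same using h by blast
    show "nca (p @ [0]) (p @ [1]) = p" unfolding nca_append using h by simp
  qed
  have KH: "H (p @ [0]) \<parallel> H (p @ [1]) \<and> prefix (H p) (F p) \<and> even (length (F p)) = even (length (H p))"
    if "p \<in> inner S" for p
  proof -
    have a: "p @ [0] \<in> pos S" "p @ [1] \<in> pos S" using ch[OF that] by auto
    have "H (p @ [0]) \<parallel> H (p @ [1]) \<and> prefix (H (nca (p @ [0]) (p @ [1]))) (nca (H (p @ [0])) (H (p @ [1])))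
         \<and> (even (length (nca (H (p @ [0])) (H (p @ [1])))) = even (length (H (nca (p @ [0]) (p @ [1])))))"
      using Hc a p01(1)[of p] by blast
    then show ?thesis unfolding p01(2) F_def using that by simp
  qed
  have K1: "prefix (H p) (F p)" for p using KH[of p] unfolding F_def by (cases "p \<in> inner S") auto
  have Fpos: "F p \<in> pos T" if "p \<in> pos S" for p
  proof (cases "p \<in> inner S")
    case True
    have "H (p @ [0]) \<in> pos T" using Ha ch[OF True] by auto
    then show ?thesis using True nca_prefix1 valid_prefix unfolding F_def pos_def by auto
  next
    case False then show ?thesis using Ha that unfolding F_def by auto
  qed
  have Hsp: "strict_prefix (F p) (H (p @ [a]))" if "p \<in> inner S" "a < 2" for p a
  proof -
    have "a = 0 \<or> a = 1" using that by auto
    then show ?thesis using KH[OF that(1)] that(1) unfolding F_def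
      using nca_parallel_strict1 nca_parallel_strict2 by auto
  qed
  have below: "prefix (H (p @ [a])) (F q)" if "p @ [a] \<in> pos S" "q \<in> pos S" "prefix (p @ [a]) q" for p a q
    using Hb that K1[of q] prefix_order.trans by blast
  have strict: "strict_prefix (F u) (F v)" if hs: "u \<in> pos S" "v \<in> pos S" "strict_prefix u v" for u v
  proof -
    obtain a r where v: "v = u @ a # r"
      using hs(3) by (metis prefix_def strict_prefix_def self_append_conv neq_Nil_conv)
    have ui: "u \<in> inner S" using strict_prefix_inner hs unfolding pos_def by blast
    have ua: "u @ [a] \<in> pos S" using valid_prefix[of S v "u @ [a]"] hs(2) v unfolding pos_def by auto
    then have a2: "a < 2" using ch[OF ui] by blast
    have "prefix (H (u @ [a])) (F v)" using below[OF ua hs(2)] v by auto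
    then show ?thesis using Hsp[OF ui a2] prefix_order.less_le_trans by blast
  qed
  have ncaF: "F (nca u v) = nca (F u) (F v) \<and> (u \<noteq> v \<longrightarrow> F u \<noteq> F v)" if u: "u \<in> pos S" and v: "v \<in> pos S" for u v
  proof (cases u v rule: prefix_cases)
    case 1
    show ?thesis
    proof (cases "u = v")
      case True then show ?thesis using nca_prefix_eq[of "F u" "F u"] nca_prefix_eq[of u u] by simp
    next
      case False
      then have "strict_prefix (F u) (F v)" using strict u v 1 by (auto simp: strict_prefix_def)
      then show ?thesis using nca_prefix_eq 1 False by (auto simp: strict_prefix_def)
    qed
  next
    case 2
    then have "strict_prefix (F v) (F u)" using strict u v by auto
    then show ?thesis using nca_prefix_eq nca_commute 2 by (metis prefix_order.less_le)
  next
    case 3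
    define w where "w = nca u v"
    obtain a b x y where ab: "a \<noteq> b" "u = w @ a # x" "v = w @ b # y"
      using nca_parallel[OF 3] unfolding w_def by blast
    have wi: "w \<in> inner S" using strict_prefix_inner u nca_parallel_strict1[OF 3] unfolding w_def pos_def by blast
    have wa: "w @ [a] \<in> pos S" using valid_prefix[of S u "w @ [a]"] u ab(2) unfolding pos_def by auto
    have wb: "w @ [b] \<in> pos S" using valid_prefix[of S v "w @ [b]"] v ab(3) unfolding pos_def by auto
    have a2: "a < 2" "b < 2" using ch[OF wi] wa wb by auto
    have pa: "prefix (H (w @ [a])) (F u)" using below[OF wa u] ab(2) by auto
    have pb: "prefix (H (w @ [b])) (F v)" using below[OF wb v] ab(3) by auto
    have ab01: "(a = 0 \<and> b = 1) \<or> (a = 1 \<and> b = 0)" using a2 ab(1) by auto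
    have k: "H (w @ [0]) \<parallel> H (w @ [1])" using KH[OF wi] by blast
    have hp: "H (w @ [a]) \<parallel> H (w @ [b])"
      using ab01 k parallel_commute by auto
    have e: "nca (F u) (F v) = nca (H (w @ [a])) (H (w @ [b]))" by (rule nca_ext[OF pa pb hp])
    have "nca (H (w @ [a])) (H (w @ [b])) = F w"
      using ab01 wi nca_commute[of "H (w @ [0])"] unfolding F_def by auto
    moreover have "F u \<parallel> F v" using par_ext[OF hp pa pb] .
    ultimately show ?thesis using e unfolding w_def by auto
  qed
  show ?thesis
  proof (intro exI conjI)
    show "F ` pos S \<subseteq> pos T" using Fpos by auto
    show "inj_on F (pos S)" unfolding inj_on_def using ncaF by blast
    show "\<forall>u \<in> pos S. \<forall>v \<in> pos S. F (nca u v) = nca (F u) (F v)" using ncaF by blast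
    show "\<forall>p \<in> inner S. even (length (F p)) = even (length (H p))" using KH by blast
  qed
qed



lemma size_nth_less: "i < length ts \<Longrightarrow> size (ts ! i) < Suc (size_list size ts)"
  using size_list_estimation'[of "ts ! i" ts "size (ts ! i)" size] nth_mem by fastforce

function bld :: "(nat list \<Rightarrow> nat) \<Rightarrow> nat \<Rightarrow> rtree \<Rightarrow> rtree" where
  "bld c d (Nd ts) = (if ts = [] then Nd [] else if (c [] = 0) = even d
     then Nd (map (\<lambda>i. bld (\<lambda>q. c (i # q)) (Suc d) (ts ! i)) [0..<length ts])
     else Nd [Nd (map (\<lambda>i. bld (\<lambda>q. c (i # q)) (Suc (Suc d)) (ts ! i)) [0..<length ts]), Nd []])"
  by pat_completeness auto
termination
  by (relation "measure (\<lambda>(c, d, t). size t)") (auto simp: size_nth_less)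

fun gmap :: "(nat list \<Rightarrow> nat) \<Rightarrow> nat \<Rightarrow> rtree \<Rightarrow> nat list \<Rightarrow> nat list" where
  "gmap c d (Nd ts) [] = (if ts \<noteq> [] \<and> \<not> ((c [] = 0) = even d) then [0] else [])"
| "gmap c d (Nd ts) (i # q) = (if i < length ts then (if (c [] = 0) = even d then [] else [0]) @
     i # gmap (\<lambda>q. c (i # q)) (if (c [] = 0) = even d then Suc d else Suc (Suc d)) (ts ! i) q else [])"

lemma GM: "R0 t (bld c d t) (gmap c d t) \<and> (\<forall>p\<in>inner t. gmap c d t p \<in> inner (bld c d t)
   \<and> even (d + length (gmap c d t p)) = (c p = 0))"
proof (induction t arbitrary: c d)
  case (Nd ts)
  show ?case
  proof (cases "ts = []")
    case True
    have "R0 (Nd ts) (bld c d (Nd ts)) (gmap c d (Nd ts))"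
      by (rule G0[where r = "[]" and P = "\<lambda>_. []" and G = "\<lambda>_. id"]) (use True in auto)
    moreover have "inner (Nd ts) = {}" using True inner_kids by fastforce
    ultimately show ?thesis by blast
  next
    case ne: False
    define ok where "ok = ((c [] = 0) = even d)"
    define r where "r = (if ok then [] else [0::nat])"
    define e where "e = (if ok then Suc d else Suc (Suc d))"
    define K where "K = Nd (map (\<lambda>i. bld (\<lambda>q. c (i # q)) e (ts ! i)) [0..<length ts])"
    define G where "G = (\<lambda>j. gmap (\<lambda>q. c (j # q)) e (ts ! j))"
    have B: "bld c d (Nd ts) = (if ok then K else Nd [K, Nd []])"
      using ne unfolding ok_def K_def e_def by auto
    have vr: "valid (bld c d (Nd ts)) r" and sr: "subt (bld c d (Nd ts)) r = K"
      unfolding B r_def by auto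
    have sK: "subt K [j] = bld (\<lambda>q. c (j # q)) e (ts ! j)" "valid K [j]" if "j < length ts" for j
      using that unfolding K_def by auto
    have g0: "gmap c d (Nd ts) [] = r" using ne unfolding r_def ok_def by auto
    have g1: "gmap c d (Nd ts) (j # q) = r @ [j] @ G j q" if "j < length ts" for j q
      using that unfolding r_def ok_def G_def e_def by auto
    have IH: "R0 (ts ! j) (bld (\<lambda>q. c (j # q)) e (ts ! j)) (G j) \<and>
       (\<forall>p\<in>inner (ts ! j). G j p \<in> inner (bld (\<lambda>q. c (j # q)) e (ts ! j))
         \<and> even (e + length (G j p)) = (c (j # p) = 0))" if "j < length ts" for j
      using Nd.IH[of "ts ! j" "\<lambda>q. c (j # q)" e] that unfolding G_def by auto
    have "R0 (Nd ts) (bld c d (Nd ts)) (gmap c d (Nd ts))"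
    proof (rule G0[where r = r and P = "\<lambda>j. [j]" and G = G])
      show "\<forall>j<length ts. valid (subt (bld c d (Nd ts)) r) [j] \<and>
         R0 (ts ! j) (subt (subt (bld c d (Nd ts)) r) [j]) (G j)"
        using sK IH unfolding sr by auto
      show "\<forall>j<length ts. \<forall>k<length ts. j \<noteq> k \<longrightarrow> [j] \<parallel> [k] \<and> even (length (nca [j] [k]))"
        using heads_par by auto
    qed (use vr g0 g1 in auto)
    moreover have "gmap c d (Nd ts) p \<in> inner (bld c d (Nd ts))
         \<and> even (d + length (gmap c d (Nd ts) p)) = (c p = 0)" if p: "p \<in> inner (Nd ts)" for p
    proof (cases p)
      case Nil
      have "[] \<in> inner K" using ne unfolding K_def inner_Nil by simp
      then have "r @ [] \<in> inner (bld c d (Nd ts))" unfolding inner_append using vr sr by simp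
      moreover have "even (d + length r) = (c [] = 0)" unfolding r_def using ok_def by auto
      ultimately show ?thesis using Nil g0 by auto
    next
      case (Cons j q)
      then have j: "j < length ts" and q: "q \<in> inner (ts ! j)" using p inner_Cons by auto
      have ih: "G j q \<in> inner (bld (\<lambda>q. c (j # q)) e (ts ! j))" "even (e + length (G j q)) = (c (j # q) = 0)"
        using IH[OF j] q by auto
      have "[j] @ G j q \<in> inner K" unfolding inner_append using sK[OF j] ih(1) by simp
      then have "r @ ([j] @ G j q) \<in> inner (bld c d (Nd ts))" unfolding inner_append using vr sr by simp
      moreover have "e = d + length r + 1" unfolding e_def r_def by auto
      ultimately show ?thesis using Cons g1[OF j] ih(2) by auto
    qed
    ultimately show ?thesis by blast
  qed
qed



fun nl :: "rtree \<Rightarrow> nat" where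
  "nl (Nd ts) = (if ts = [] then 1 else sum_list (map nl ts))"

lemma leaves_Nd: "leaves (Nd ts) = (if ts = [] then {[]} else (\<Union>i<length ts. Cons i ` leaves (ts ! i)))"
proof (cases "ts = []")
  case True
  have "p \<in> leaves (Nd []) \<longleftrightarrow> p = []" for p
    by (cases p) (auto simp: leaves_def pos_def degree_def)
  then show ?thesis using True by auto
next
  case False
  have "p \<in> leaves (Nd ts) \<longleftrightarrow> p \<in> (\<Union>i<length ts. Cons i ` leaves (ts ! i))" for p
  proof (cases p)
    case Nil then show ?thesis using False by (auto simp: leaves_def degree_def)
  next
    case (Cons j q)
    have "j # q \<in> leaves (Nd ts) \<longleftrightarrow> j < length ts \<and> q \<in> leaves (ts ! j)"
      by (auto simp: leaves_def pos_Cons degree_Cons)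
    moreover have "j # q \<in> (\<Union>i<length ts. Cons i ` leaves (ts ! i)) \<longleftrightarrow> j < length ts \<and> q \<in> leaves (ts ! j)"
      by blast
    ultimately show ?thesis using Cons by simp
  qed
  then have "leaves (Nd ts) = (\<Union>i<length ts. Cons i ` leaves (ts ! i))" by (rule set_eqI)
  then show ?thesis using False by simp
qed

lemma card_leaves: "finite (leaves t) \<and> card (leaves t) = nl t"
proof (induction t)
  case (Nd ts)
  show ?case
  proof (cases "ts = []")
    case True then show ?thesis by (simp add: leaves_Nd)
  next
    case False
    have fin: "finite (leaves (ts ! i))" "card (leaves (ts ! i)) = nl (ts ! i)" if "i < length ts" for i
      using Nd.IH[of "ts ! i"] that by auto
    have "card (\<Union>i<length ts. Cons i ` leaves (ts ! i)) = (\<Sum>i<length ts. card (Cons i ` leaves (ts ! i)))"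
      by (rule card_UN_disjoint) (auto simp: fin)
    also have "\<dots> = (\<Sum>i<length ts. nl (ts ! i))"
      by (rule sum.cong) (auto simp: card_image fin)
    also have "\<dots> = sum_list (map nl ts)"
      by (simp add: sum_list_sum_nth lessThan_atLeast0)
    finally show ?thesis using False fin by (simp add: leaves_Nd)
  qed
qed

lemma rec_deg: "(\<forall>p\<in>pos (Nd ts). Q (degree (Nd ts) p)) \<longleftrightarrow>
   Q (length ts) \<and> (\<forall>i<length ts. \<forall>p\<in>pos (ts ! i). Q (degree (ts ! i) p))"
proof
  assume a: "\<forall>p\<in>pos (Nd ts). Q (degree (Nd ts) p)"
  have "Q (degree (Nd ts) [])" using a by simp
  moreover have "Q (degree (ts ! i) p)" if "i < length ts" "p \<in> pos (ts ! i)" for i p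
    using a[rule_format, of "i # p"] that by (simp add: pos_Cons degree_Cons)
  ultimately show "Q (length ts) \<and> (\<forall>i<length ts. \<forall>p\<in>pos (ts ! i). Q (degree (ts ! i) p))"
    by (simp add: degree_def)
next
  assume a: "Q (length ts) \<and> (\<forall>i<length ts. \<forall>p\<in>pos (ts ! i). Q (degree (ts ! i) p))"
  show "\<forall>p\<in>pos (Nd ts). Q (degree (Nd ts) p)"
  proof
    fix p assume "p \<in> pos (Nd ts)"
    then show "Q (degree (Nd ts) p)" using a
      by (cases p) (auto simp: pos_Cons degree_Cons degree_def)
  qed
qed

lemma nd_rec: "no_deg1 (Nd ts) \<longleftrightarrow> length ts \<noteq> 1 \<and> (\<forall>i<length ts. no_deg1 (ts ! i))"
  unfolding no_deg1_def using rec_deg[where Q="\<lambda>k. k \<noteq> 1" and ts=ts] by blast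
lemma bin_rec: "binary (Nd ts) \<longleftrightarrow> length ts \<le> 2 \<and> (\<forall>i<length ts. binary (ts ! i))"
  unfolding binary_def using rec_deg[where Q="\<lambda>k. k \<le> 2" and ts=ts] by blast

lemma nd_bld: "no_deg1 t \<Longrightarrow> no_deg1 (bld c d t)"
proof (induction t arbitrary: c d)
  case (Nd ts)
  show ?case
  proof (cases "ts = []")
    case True then show ?thesis by (simp add: nd_rec)
  next
    case False
    define e where "e = (if (c [] = 0) = even d then Suc d else Suc (Suc d))"
    define K where "K = Nd (map (\<lambda>i. bld (\<lambda>q. c (i # q)) e (ts ! i)) [0..<length ts])"
    have B: "bld c d (Nd ts) = (if (c [] = 0) = even d then K else Nd [K, Nd []])"
      using False unfolding K_def e_def by auto
    have "no_deg1 K" unfolding K_def nd_rec using Nd.prems Nd.IH unfolding nd_rec by auto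
    moreover have "no_deg1 (Nd [])" by (simp add: nd_rec)
    ultimately have "no_deg1 (Nd [K, Nd []])" unfolding nd_rec[of "[K, Nd []]"]
      by (simp add: less_Suc_eq)
    then show ?thesis unfolding B using \<open>no_deg1 K\<close> by simp
  qed
qed

lemma nl_pos: "1 \<le> nl t"
proof (induction t)
  case (Nd ts)
  show ?case
  proof (cases ts)
    case Nil then show ?thesis by simp
  next
    case (Cons a as)
    then have "1 \<le> nl a" using Nd.IH by simp
    then show ?thesis using Cons by simp
  qed
qed



lemma nl_bld: "binary t \<Longrightarrow> no_deg1 t \<Longrightarrow> nl (bld c d t) + 1 \<le> 2 * nl t"
proof (induction t arbitrary: c d)
  case (Nd ts)
  show ?case
  proof (cases "ts = []")
    case True then show ?thesis by simp
  next
    case False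
    have "length ts \<noteq> 1" "length ts \<le> 2" using Nd.prems unfolding nd_rec bin_rec by auto
    moreover have "length ts \<noteq> 0" using False by simp
    ultimately have l2: "length ts = 2" by linarith
    then obtain a b where ab: "ts = [a, b]"
      by (metis (no_types, lifting) One_nat_def Suc_1 length_0_conv length_Suc_conv)
    have ch: "binary a" "no_deg1 a" "binary b" "no_deg1 b"
      using Nd.prems unfolding ab nd_rec bin_rec by auto
    have ia: "nl (bld c' e a) + 1 \<le> 2 * nl a" for c' e
      using Nd.IH[of a] ch ab by simp
    have ib: "nl (bld c' e b) + 1 \<le> 2 * nl b" for c' e
      using Nd.IH[of b] ch ab by simp
    have u: "[0..<length ts] = [0, 1]" using ab by (simp add: upt_rec)
    have "nl (bld c d (Nd ts)) \<le> nl (bld (\<lambda>q. c (0 # q)) (if (c [] = 0) = even d then Suc d else Suc (Suc d)) a)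
       + nl (bld (\<lambda>q. c (1 # q)) (if (c [] = 0) = even d then Suc d else Suc (Suc d)) b) + 1"
      using ab unfolding u by (simp add: nl_pos)
    moreover have "nl (Nd ts) = nl a + nl b" using ab by simp
    ultimately show ?thesis
      using ia[of "\<lambda>q. c (0 # q)" "if (c [] = 0) = even d then Suc d else Suc (Suc d)"]
        ib[of "\<lambda>q. c (1 # q)" "if (c [] = 0) = even d then Suc d else Suc (Suc d)"] by linarith
  qed
qed

theorem lemma15:
  fixes T T' :: rtree and n :: nat and c :: "nat list \<Rightarrow> nat"
  assumes "universal (2 * n - 1) T"
    and "binary T'" and "no_deg1 T'" and "card (leaves T') = n"
    and "\<forall>v \<in> inner T'. c v \<in> {0, 1}"
  shows "\<exists>f. f ` pos T' \<subseteq> pos T \<and> inj_on f (pos T')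
     \<and> (\<forall>u \<in> pos T'. \<forall>v \<in> pos T'. f (nca u v) = nca (f u) (f v))
     \<and> (\<forall>v \<in> inner T'. c v = 0 \<longrightarrow> even (depth (f v)))
     \<and> (\<forall>v \<in> inner T'. c v = 1 \<longrightarrow> odd (depth (f v)))"
proof -
  define T2 where "T2 = bld c 0 T'"
  have nlT: "nl T' = n" using card_leaves[of T'] assms(4) by simp
  have nd2: "no_deg1 T2" unfolding T2_def using nd_bld assms(3) by blast
  have "nl T2 + 1 \<le> 2 * n" unfolding T2_def using nl_bld[OF assms(2,3)] nlT by blast
  then have "card (leaves T2) \<le> 2 * n - 1" using card_leaves[of T2] by simp
  then have "implements T T2" using assms(1) nd2 unfolding universal_def by blast
  then obtain S where S: "op_step\<^sup>*\<^sup>* T S" "tiso S T2" unfolding implements_def by blast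
  obtain f1 where f1: "R S T f1" using steps_R[OF S(1)] by blast
  obtain f2 where f2: "R T2 S f2" using tiso_R[OF S(2)] by blast
  define h where "h = f1 \<circ> f2"
  have h: "R T2 T h" unfolding h_def using comp[OF f1 f2] .
  define g where "g = gmap c 0 T'"
  have g: "R0 T' T2 g" "\<forall>p\<in>inner T'. g p \<in> inner T2 \<and> even (length (g p)) = (c p = 0)"
    using GM[of T' c 0] unfolding g_def T2_def by auto
  have H: "R0 T' T (h \<circ> g)" using comp0[OF h g(1)] g(2) by blast
  obtain F where F: "F ` pos T' \<subseteq> pos T" "inj_on F (pos T')"
     "\<forall>u \<in> pos T'. \<forall>v \<in> pos T'. F (nca u v) = nca (F u) (F v)"
     "\<forall>p \<in> inner T'. even (length (F p)) = even (length ((h \<circ> g) p))"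
    using Fin[OF H assms(2,3)] by blast
  have par: "even (depth (F p)) = (c p = 0)" if "p \<in> inner T'" for p
  proof -
    have "even (length ((h \<circ> g) p)) = even (length (g p))" using h g(2) that unfolding R_def by auto
    then show ?thesis using F(4) g(2) that unfolding depth_def by auto
  qed
  show ?thesis
    by (rule exI[of _ F]) (use F par in auto)
qed


end
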